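(* Let $\mathcal{E}=\{n\ge 1: e(n)=e(n+1)\}$. (1) The set $\mathcal{E}$ is infinite. If $m\in\mathcal{E}$, then $n=4m+1$ satisfies $e(n)=e(n+1)=e(n+2)$. Conversely, if $n\ge 1$ satisfies $e(n)=e(n+1)=e(n+2)$, then $n=4m+1$ for some integer $m\in\mathcal{E}$. (2) There is no integer $n\ge 1$ with $e(n)=e(n+1)=e(n+2)=e(n+3)$.
   Context: The Stern polynomials $B_n(t)\in\mathbb{Z}[t]$, $n\ge 0$, are defined by $B_0(t)=0$, $B_1(t)=1$, $B_{2n}(t)=tB_n(t)$ and $B_{2n+1}(t)=B_n(t)+B_{n+1}(t)$ for $n\ge 1$. For $n\ge 1$, $e(n)=\deg_t B_n(t)$. *)

theory Defs
  imports "HOL-Computational_Algebra.Polynomial"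
begin

function stern_poly :: "nat \<Rightarrow> int poly" where
  "stern_poly n =
     (if n = 0 then 0
      else if n = 1 then 1
      else if even n then pCons 0 (stern_poly (n div 2))
      else stern_poly (n div 2) + stern_poly (n div 2 + 1))"
  by pat_completeness auto
termination
  by (relation "measure id") (auto elim!: oddE)

declare stern_poly.simps [simp del]

definition stern_e :: "nat \<Rightarrow> nat" where
  "stern_e n = degree (stern_poly n)"

definition stern_E :: "nat set" where
  "stern_E = {n. n \<ge> 1 \<and> stern_e n = stern_e (n + 1)}"

end

theory Submission
  imports Defs
begin

lemma sp_even: "k \<ge> 1 \<Longrightarrow> stern_poly (2*k) = pCons 0 (stern_poly k)"
  by (subst stern_poly.simps) auto

lemma sp_odd: "k \<ge> 1 \<Longrightarrow> stern_poly (2*k+1) = stern_poly k + stern_poly (k+1)"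
  by (subst stern_poly.simps) auto

lemma sp_odd': "k \<ge> 1 \<Longrightarrow> stern_poly (Suc (2*k)) = stern_poly k + stern_poly (Suc k)"
  using sp_odd by simp

lemma sp2: "stern_poly (Suc (Suc 0)) = pCons 0 1"
  using sp_even[of 1] by (simp add: numeral_2_eq_2, subst stern_poly.simps, simp)

lemma sp0: "stern_poly 0 = 0" by (subst stern_poly.simps) auto
lemma sp1: "stern_poly 1 = 1" by (subst stern_poly.simps) auto
lemma sp1s[simp]: "stern_poly (Suc 0) = 1" using sp1 by simp

lemma sp_nonneg: "coeff (stern_poly n) i \<ge> 0"
proof (induction n arbitrary: i rule: less_induct)
  case (less n)
  show ?case
  proof (cases "n \<le> 1")
    case True
    then have "n = 0 \<or> n = 1" by auto
    then show ?thesis by (auto simp: sp0 sp1 coeff_1)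
  next
    case False
    obtain k where k: "n = 2*k \<or> n = 2*k+1" by (metis oddE evenE)
    with False have k1: "k \<ge> 1" by auto
    from k show ?thesis
    proof
      assume n: "n = 2*k"
      show ?thesis using less.IH[of k] k1 n by (cases i) (auto simp: sp_even)
    next
      assume n: "n = 2*k+1"
      show ?thesis using less.IH[of k] less.IH[of "k+1"] k1 n
        by (auto simp: sp_odd' intro: add_nonneg_nonneg)
    qed
  qed
qed

lemma nonneg_sum_zero:
  fixes p q :: "int poly"
  assumes "\<And>i. coeff p i \<ge> 0" "\<And>i. coeff q i \<ge> 0" "p + q = 0"
  shows "p = 0"
proof -
  have "\<And>i. coeff p i = 0"
  proof -
    fix i
    have "coeff p i + coeff q i = 0" using assms(3) by (metis coeff_add coeff_0)
    then show "coeff p i = 0" using assms(1,2)[of i] by linarith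
  qed
  then show ?thesis by (simp add: poly_eq_iff)
qed

lemma sp_nz: "n \<ge> 1 \<Longrightarrow> stern_poly n \<noteq> 0"
proof (induction n rule: less_induct)
  case (less n)
  show ?case
  proof (cases "n = 1")
    case True then show ?thesis by (simp add: sp1)
  next
    case False
    obtain k where k: "n = 2*k \<or> n = 2*k+1" by (metis oddE evenE)
    with False less.prems have k1: "k \<ge> 1" by auto
    from k show ?thesis
    proof
      assume n: "n = 2*k"
      show ?thesis using less.IH[of k] k1 n by (auto simp: sp_even)
    next
      assume n: "n = 2*k+1"
      show ?thesis using less.IH[of k] k1 n nonneg_sum_zero[OF sp_nonneg sp_nonneg, of k "k+1"]
        by (auto simp: sp_odd')
    qed
  qed
qed

lemma degree_add_nonneg:
  fixes p q :: "int poly"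
  assumes "\<And>i. coeff p i \<ge> 0" "\<And>i. coeff q i \<ge> 0"
  shows "degree (p + q) = max (degree p) (degree q)"
proof (cases "p = 0 \<or> q = 0")
  case True then show ?thesis by auto
next
  case False
  define d where "d = max (degree p) (degree q)"
  have "coeff p d + coeff q d \<noteq> 0"
  proof (cases "degree p \<le> degree q")
    case True
    then have "coeff q d > 0" using False assms(2)[of d] unfolding d_def
      by (metis max.absorb2 leading_coeff_0_iff order_le_neq_trans)
    then show ?thesis using assms(1)[of d] by linarith
  next
    case f: False
    then have "coeff p d > 0" using False assms(1)[of d] unfolding d_def
      by (metis max.absorb1 nle_le leading_coeff_0_iff order_le_neq_trans)
    then show ?thesis using assms(2)[of d] by linarith
  qed
  then have "coeff (p + q) d \<noteq> 0" by simp
  then have "d \<le> degree (p+q)" by (rule le_degree)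
  moreover have "degree (p+q) \<le> d" unfolding d_def by (rule degree_add_le_max)
  ultimately show ?thesis unfolding d_def by (meson le_antisym)
qed

lemma e_even: "k \<ge> 1 \<Longrightarrow> stern_e (2*k) = stern_e k + 1"
  using sp_nz[of k] by (simp add: stern_e_def sp_even degree_pCons_eq)

lemma e_odd: "stern_e (2*k+1) = max (stern_e k) (stern_e (k+1))"
proof (cases "k = 0")
  case True then show ?thesis by (simp add: stern_e_def sp0 sp1)
next
  case False
  then have "stern_poly (2*k+1) = stern_poly k + stern_poly (k+1)" by (simp add: sp_odd')
  then show ?thesis
    by (simp only: stern_e_def degree_add_nonneg sp_nonneg)
qed

definition dd :: "nat \<Rightarrow> int" where "dd n = int (stern_e (n+1)) - int (stern_e n)"

lemma dd_even: "k \<ge> 1 \<Longrightarrow> dd (2*k) = max 0 (dd k) - 1"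
  unfolding dd_def using e_even[of k] e_odd[of k] by auto

lemma dd_odd: "k \<ge> 1 \<Longrightarrow> dd (2*k+1) = 1 + min 0 (dd k)"
proof -
  assume k: "k \<ge> 1"
  have "2*k+1+1 = 2*(k+1)" by simp
  then show ?thesis unfolding dd_def using e_even[of "k+1"] e_odd[of k] k by auto
qed

lemma dd0: "dd 0 = 0" and dd1: "dd 1 = 1"
  by (simp_all add: dd_def stern_e_def sp0 sp1 sp2)

lemma dd_bound: "dd n \<in> {-1,0,1}"
proof (induction n rule: less_induct)
  case (less n)
  show ?case
  proof (cases "n \<le> 1")
    case True
    then have "n = 0 \<or> n = 1" by auto
    then show ?thesis using dd0 dd1 by auto
  next
    case False
    obtain k where k: "n = 2*k \<or> n = 2*k+1" by (metis oddE evenE)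
    with False have k1: "k \<ge> 1" by auto
    have "k < n" using k k1 by auto
    then have "dd k \<in> {-1,0,1}" by (rule less.IH)
    then show ?thesis using k dd_even[OF k1] dd_odd[OF k1] by auto
  qed
qed

lemma E_iff: "n \<in> stern_E \<longleftrightarrow> n \<ge> 1 \<and> dd n = 0"
  unfolding stern_E_def dd_def by auto

lemma triple: "n \<ge> 1 \<Longrightarrow> dd n = 0 \<Longrightarrow> dd (n+1) = 0 \<Longrightarrow> \<exists>m. m \<ge> 1 \<and> dd m = 0 \<and> n = 4*m+1"
proof -
  assume n1: "n \<ge> 1" and a: "dd n = 0" and b: "dd (n+1) = 0"
  obtain k where k: "n = 2*k \<or> n = 2*k+1" by (metis oddE evenE)
  show ?thesis
  proof (cases "n = 2*k")
    case True
    then have k1: "k \<ge> 1" using n1 by auto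
    have "dd k = 1" using a dd_even[OF k1] True dd_bound[of k] by auto
    moreover have "dd k = -1" using b dd_odd[OF k1] True dd_bound[of k] by auto
    ultimately show ?thesis by simp
  next
    case False
    then have n: "n = 2*k+1" using k by auto
    have k1: "k \<ge> 1" using n a dd1 by (cases "k = 0") auto
    have dk: "dd k = -1" using a dd_odd[OF k1] n dd_bound[of k] by auto
    have "n + 1 = 2*(k+1)" using n by simp
    then have dk1: "dd (k+1) = 1" using b dd_even[of "k+1"] dd_bound[of "k+1"] by auto
    obtain m where m: "k = 2*m \<or> k = 2*m+1" by (metis oddE evenE)
    show ?thesis
    proof (cases "k = 2*m")
      case True
      then have m1: "m \<ge> 1" using k1 by auto
      have "dd m \<noteq> 1" using dk dd_even[OF m1] True by auto
      moreover have "dd m \<noteq> -1" using dk1 dd_odd[OF m1] True by auto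
      ultimately have "dd m = 0" using dd_bound[of m] by auto
      then show ?thesis using m1 n True by auto
    next
      case False
      then have km: "k = 2*m+1" using m by auto
      show ?thesis
      proof (cases "m = 0")
        case True then show ?thesis using dk km dd1 by simp
      next
        case False
        then have "m \<ge> 1" by simp
        then show ?thesis using dk km dd_odd[of m] dd_bound[of m] by auto
      qed
    qed
  qed
qed

lemma fwd: "m \<ge> 1 \<Longrightarrow> dd m = 0 \<Longrightarrow> dd (4*m+1) = 0 \<and> dd (4*m+2) = 0"
proof -
  assume m1: "m \<ge> 1" and a: "dd m = 0"
  have "dd (2*m) = -1" using dd_even[OF m1] a by simp
  moreover have "dd (2*m+1) = 1" using dd_odd[OF m1] a by simp
  moreover have "4*m+1 = 2*(2*m)+1" "4*m+2 = 2*(2*m+1)" by simp_all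
  ultimately show ?thesis using dd_odd[of "2*m"] dd_even[of "2*m+1"] m1 by auto
qed

lemma dd2: "dd 2 = 0" using dd_even[of 1] dd1 by simp

theorem theorem4p6:
  shows "infinite stern_E
    \<and> (\<forall>m \<in> stern_E. stern_e (4*m+1) = stern_e (4*m+2) \<and> stern_e (4*m+2) = stern_e (4*m+3))
    \<and> (\<forall>n::nat. n \<ge> 1 \<and> stern_e n = stern_e (n+1) \<and> stern_e (n+1) = stern_e (n+2)
          \<longrightarrow> (\<exists>m \<in> stern_E. n = 4*m+1))
    \<and> \<not> (\<exists>n::nat. n \<ge> 1 \<and> stern_e n = stern_e (n+1) \<and> stern_e (n+1) = stern_e (n+2)
          \<and> stern_e (n+2) = stern_e (n+3))"
proof (intro conjI)
  have unb: "\<exists>n \<in> stern_E. N < n" for N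
  proof (induction N)
    case 0 show ?case using dd2 E_iff[of 2] by (intro bexI[of _ 2]) auto
  next
    case (Suc N)
    then obtain n where n: "n \<in> stern_E" "N < n" by auto
    then have "4*n+1 \<in> stern_E" using fwd[of n] E_iff by auto
    then show ?case using n by (intro bexI[of _ "4*n+1"]) auto
  qed
  show "infinite stern_E"
    using unb by (auto simp: infinite_nat_iff_unbounded)
  show "\<forall>m \<in> stern_E. stern_e (4*m+1) = stern_e (4*m+2) \<and> stern_e (4*m+2) = stern_e (4*m+3)"
  proof
    fix m assume "m \<in> stern_E"
    then have "dd (4*m+1) = 0 \<and> dd (4*m+2) = 0" using fwd E_iff by auto
    then show "stern_e (4*m+1) = stern_e (4*m+2) \<and> stern_e (4*m+2) = stern_e (4*m+3)"
      unfolding dd_def by (simp add: add.assoc numeral_3_eq_3)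
  qed
  show "\<forall>n::nat. n \<ge> 1 \<and> stern_e n = stern_e (n+1) \<and> stern_e (n+1) = stern_e (n+2)
          \<longrightarrow> (\<exists>m \<in> stern_E. n = 4*m+1)"
  proof (intro allI impI)
    fix n :: nat assume h: "n \<ge> 1 \<and> stern_e n = stern_e (n+1) \<and> stern_e (n+1) = stern_e (n+2)"
    then have "dd n = 0" "dd (n+1) = 0" unfolding dd_def by (simp_all add: add.assoc)
    then obtain m where "m \<ge> 1 \<and> dd m = 0 \<and> n = 4*m+1" using triple h by blast
    then show "\<exists>m \<in> stern_E. n = 4*m+1" using E_iff by auto
  qed
  show "\<not> (\<exists>n::nat. n \<ge> 1 \<and> stern_e n = stern_e (n+1) \<and> stern_e (n+1) = stern_e (n+2)
          \<and> stern_e (n+2) = stern_e (n+3))"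
  proof
    assume "\<exists>n::nat. n \<ge> 1 \<and> stern_e n = stern_e (n+1) \<and> stern_e (n+1) = stern_e (n+2)
          \<and> stern_e (n+2) = stern_e (n+3)"
    then obtain n where h: "n \<ge> 1" "stern_e n = stern_e (n+1)" "stern_e (n+1) = stern_e (n+2)"
          "stern_e (n+2) = stern_e (n+3)" by blast
    then have "dd n = 0" "dd (n+1) = 0" "dd (n+2) = 0" unfolding dd_def by (simp_all add: add.assoc numeral_3_eq_3)
    then obtain m m' where "n = 4*m+1" "n+1 = 4*m'+1"
      using triple[of n] triple[of "n+1"] h(1) by force
    then show False by presburger
  qed
qed

end
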